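(* Let $V=\mathbb{K}^r$ be a finite-dimensional vector space over a field $\mathbb{K}$ and let $\Gamma$ be a locally finite graph. Then a locally specifiable linear map $\tau:V^\Gamma\to V^\Gamma$ is surjective if and only if its transpose $\tau'$ is pre-injective.
   Context: $V^\Gamma$ is the space of all maps from the vertex set of $\Gamma$ to $V$, and $V^\Gamma_0$ the subspace of finitely supported maps. A linear map $\tau:V^\Gamma\to V^\Gamma$ is locally specifiable if $\tau(f)(x)$ depends only on $f(x)$ and the values $f(y)$ for $y\sim x$; equivalently there are $r\times r$ matrices $A_{xy}$ (for $y=x$ or $y\sim x$) with $\tau(f)(x)=A_{xx}f(x)+\sum_{y\sim x}A_{xy}f(y)$. Its transpose $\tau'$ is the locally specifiable linear map whose matrix with respect to the basis $\{\delta_x^i\}$ of $V^\Gamma_0$ ($\delta_x^i(x)=e_i$, $\delta_x^i(y)=0$ for $y\ne x$) is the transpose of that of $\tau$, i.e. $\tau'(f)(x)=A_{xx}^{T}f(x)+\sum_{y\sim x}A_{yx}^{T}f(y)$. A linear map on $V^\Gamma$ is pre-injective if its restriction to $V^\Gamma_0$ is injective. *)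

theory Defs
  imports "HOL-Analysis.Analysis"
begin

definition graph :: "('v \<Rightarrow> 'v \<Rightarrow> bool) \<Rightarrow> bool" where
  "graph E \<longleftrightarrow> (\<forall>x y. E x y \<longrightarrow> E y x) \<and> (\<forall>x. \<not> E x x)"

definition locally_finite :: "('v \<Rightarrow> 'v \<Rightarrow> bool) \<Rightarrow> bool" where
  "locally_finite E \<longleftrightarrow> (\<forall>x. finite {y. E x y})"

text \<open>V = K^r is modelled as 'k^'n with 'n a finite index type (r = CARD('n)).
  The locally specifiable map with matrices A x y (used for y = x or y adjacent to x).\<close>
definition ls_map ::
  "('v \<Rightarrow> 'v \<Rightarrow> bool) \<Rightarrow> ('v \<Rightarrow> 'v \<Rightarrow> 'k::field^'n::finite^'n) \<Rightarrow> ('v \<Rightarrow> 'k^'n) \<Rightarrow> ('v \<Rightarrow> 'k^'n)" where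
  "ls_map E A f = (\<lambda>x. A x x *v f x + (\<Sum>y\<in>{y. E x y}. A x y *v f y))"

definition ls_transpose ::
  "('v \<Rightarrow> 'v \<Rightarrow> bool) \<Rightarrow> ('v \<Rightarrow> 'v \<Rightarrow> 'k::field^'n::finite^'n) \<Rightarrow> ('v \<Rightarrow> 'k^'n) \<Rightarrow> ('v \<Rightarrow> 'k^'n)" where
  "ls_transpose E A f = (\<lambda>x. transpose (A x x) *v f x + (\<Sum>y\<in>{y. E x y}. transpose (A y x) *v f y))"

definition fin_supp :: "('v \<Rightarrow> 'k::zero^'n) set" where
  "fin_supp = {f. finite {x. f x \<noteq> 0}}"

definition pre_injective :: "(('v \<Rightarrow> 'k::zero^'n) \<Rightarrow> ('v \<Rightarrow> 'k^'n)) \<Rightarrow> bool" where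
  "pre_injective \<tau> \<longleftrightarrow> inj_on \<tau> fin_supp"

end

theory Submission imports Defs "HOL-Library.Function_Algebras" begin

definition sc :: "'k::field \<Rightarrow> ('v \<Rightarrow> 'k^'n) \<Rightarrow> ('v \<Rightarrow> 'k^'n)" where
  "sc c f = (\<lambda>x. c *s f x)"

lemma vs_sc: "vector_space (sc :: 'k::field \<Rightarrow> ('v \<Rightarrow> 'k^'n) \<Rightarrow> _)"
  by unfold_locales (auto simp: sc_def fun_eq_iff vector_add_ldistrib vector_sadd_rdistrib vector_smult_assoc)

lemma vs_k: "vector_space ((*) :: 'k::field \<Rightarrow> 'k \<Rightarrow> 'k)"
  by unfold_locales (auto simp: algebra_simps)

definition dl :: "'v \<times> 'n \<Rightarrow> ('v \<Rightarrow> 'k::field^'n)" where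
  "dl p = (\<lambda>y. if y = fst p then axis (snd p) 1 else 0)"

lemma dl_apply: "dl (x,j) y $ k = (if y = x \<and> j = k then 1 else 0)"
  by (simp add: dl_def axis_def)

definition dot :: "'k::field^'n \<Rightarrow> 'k^'n \<Rightarrow> 'k" where
  "dot u w = (\<Sum>i\<in>UNIV. u$i * w$i)"

lemma mv_comp: "(M *v u) $ i = (\<Sum>j\<in>UNIV. M$i$j * u$j)"
  by (simp add: matrix_vector_mult_def)

lemma dot_mv: "dot (M *v u) w = dot u (transpose M *v (w::'k::field^'n))"
proof -
  have "dot (M *v u) w = (\<Sum>i\<in>UNIV. \<Sum>j\<in>UNIV. M$i$j * u$j * w$i)"
    unfolding dot_def mv_comp by (simp add: sum_distrib_right)
  also have "\<dots> = (\<Sum>j\<in>UNIV. \<Sum>i\<in>UNIV. M$i$j * u$j * w$i)"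
    by (rule sum.swap)
  also have "\<dots> = dot u (transpose M *v w)"
    unfolding dot_def mv_comp transpose_def by (simp add: sum_distrib_left mult_ac)
  finally show ?thesis .
qed

lemma dot_add: "dot (a + b) c = dot a c + dot b c"
  by (simp add: dot_def distrib_right sum.distrib)

lemma dot_sum: "dot (\<Sum>y\<in>F. h y) c = (\<Sum>y\<in>F. dot (h y) c)"
proof -
  have "dot (\<Sum>y\<in>F. h y) c = (\<Sum>i\<in>UNIV. \<Sum>y\<in>F. h y $ i * c $ i)"
    unfolding dot_def by (simp add: sum_component sum_distrib_right)
  also have "\<dots> = (\<Sum>y\<in>F. dot (h y) c)"
    unfolding dot_def by (rule sum.swap)
  finally show ?thesis .
qed

lemma dot_zero: "dot a 0 = 0"
  by (simp add: dot_def)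
lemma dot_comm: "dot a b = dot b a"
  by (simp add: dot_def mult.commute)

lemma T'_linear:
  shows "Vector_Spaces.linear sc sc (ls_transpose E (A :: 'v \<Rightarrow> 'v \<Rightarrow> 'k::field^'n::finite^'n))"
  unfolding Vector_Spaces.linear_iff
proof (intro conjI vs_sc allI)
  fix f g :: "'v \<Rightarrow> 'k^'n"
  show "ls_transpose E A (f + g) = ls_transpose E A f + ls_transpose E A g"
    by (simp add: ls_transpose_def fun_eq_iff matrix_vector_right_distrib sum.distrib add_ac)
next
  fix c :: 'k and f :: "'v \<Rightarrow> 'k^'n"
  show "ls_transpose E A (sc c f) = sc c (ls_transpose E A f)"
    by (simp add: ls_transpose_def sc_def fun_eq_iff vector_scalar_commute sum_cmul vector_add_ldistrib)
qed

lemma fin_supp_subspace: "module.subspace sc (fin_supp :: ('v \<Rightarrow> 'k::field^'n) set)"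
proof -
  interpret vs: vector_space "sc :: 'k \<Rightarrow> ('v \<Rightarrow> 'k^'n) \<Rightarrow> _" by (rule vs_sc)
  show ?thesis unfolding vs.subspace_def fin_supp_def
  proof (intro conjI ballI allI; simp)
    fix x y :: "'v \<Rightarrow> 'k^'n"
    assume "finite {a. x a \<noteq> 0}" "finite {a. y a \<noteq> 0}"
    then show "finite {a. x a + y a \<noteq> 0}"
      by (rule finite_subset[rotated, OF finite_UnI]) auto
  next
    fix c :: 'k and x :: "'v \<Rightarrow> 'k^'n"
    assume "finite {a. x a \<noteq> 0}"
    then show "finite {a. sc c x a \<noteq> 0}"
      by (rule finite_subset[rotated]) (auto simp: sc_def)
  qed
qed

lemma adj:
  fixes A :: "'v \<Rightarrow> 'v \<Rightarrow> 'k::field^'n::finite^'n"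
  assumes gr: "graph E" and lf: "locally_finite E" and S: "finite S" and gS: "\<forall>x. x \<notin> S \<longrightarrow> g x = 0"
  defines "D \<equiv> S \<union> (\<Union>x\<in>S. {y. E x y})"
  shows "(\<Sum>x\<in>D. dot (ls_map E A f x) (g x)) = (\<Sum>y\<in>D. dot (f y) (ls_transpose E A g y))"
proof -
  have finD: "finite D" unfolding D_def using S lf by (auto simp: locally_finite_def)
  have sym: "\<And>x y. E x y \<Longrightarrow> E y x" using gr by (auto simp: graph_def)
  have finN: "\<And>x. finite {y. E x y}" using lf by (auto simp: locally_finite_def)
  define T2 where "T2 x y = dot (A x y *v f y) (g x)" for x y
  have L1: "(\<Sum>x\<in>D. dot (ls_map E A f x) (g x)) = (\<Sum>x\<in>D. dot (A x x *v f x) (g x)) + (\<Sum>x\<in>D. \<Sum>y\<in>{y. E x y}. T2 x y)"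
    by (simp add: ls_map_def dot_add dot_sum sum.distrib T2_def)
  have R1: "(\<Sum>y\<in>D. dot (f y) (ls_transpose E A g y)) = (\<Sum>y\<in>D. dot (f y) (transpose (A y y) *v g y)) + (\<Sum>y\<in>D. \<Sum>z\<in>{z. E y z}. dot (f y) (transpose (A z y) *v g z))"
    by (simp add: ls_transpose_def dot_comm[of "f _"] dot_add dot_sum sum.distrib)
  have P1: "(\<Sum>x\<in>D. dot (A x x *v f x) (g x)) = (\<Sum>y\<in>D. dot (f y) (transpose (A y y) *v g y))"
    by (simp add: dot_mv)
  have L2: "(\<Sum>x\<in>D. \<Sum>y\<in>{y. E x y}. T2 x y) = (\<Sum>x\<in>D. \<Sum>y\<in>{y. y \<in> D \<and> E x y}. T2 x y)"
  proof (rule sum.cong[OF refl])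
    fix x assume "x \<in> D"
    show "(\<Sum>y\<in>{y. E x y}. T2 x y) = (\<Sum>y\<in>{y. y \<in> D \<and> E x y}. T2 x y)"
    proof (cases "x \<in> S")
      case True
      then have "{y. E x y} = {y. y \<in> D \<and> E x y}" unfolding D_def by auto
      then show ?thesis by simp
    next
      case False
      then have "g x = 0" using gS by auto
      then show ?thesis by (simp add: T2_def dot_zero)
    qed
  qed
  have L3: "(\<Sum>x\<in>D. \<Sum>y\<in>{y. y \<in> D \<and> E x y}. T2 x y) = (\<Sum>y\<in>D. \<Sum>x\<in>{x. x \<in> D \<and> E x y}. T2 x y)"
    by (rule sum.swap_restrict[OF finD finD])
  have R2: "(\<Sum>z\<in>{z. E y z}. dot (f y) (transpose (A z y) *v g z)) = (\<Sum>x\<in>{x. x \<in> D \<and> E x y}. T2 x y)" for y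
  proof -
    have "(\<Sum>z\<in>{z. E y z}. dot (f y) (transpose (A z y) *v g z)) = (\<Sum>z\<in>{z. E y z}. T2 z y)"
      by (simp add: T2_def dot_mv)
    also have "\<dots> = (\<Sum>x\<in>{x. x \<in> D \<and> E x y}. T2 x y)"
    proof (rule sum.mono_neutral_right[OF finN])
      show "{x. x \<in> D \<and> E x y} \<subseteq> {z. E y z}" using sym by auto
      show "\<forall>i\<in>{z. E y z} - {x. x \<in> D \<and> E x y}. T2 i y = 0"
      proof
        fix z assume z: "z \<in> {z. E y z} - {x. x \<in> D \<and> E x y}"
        then have "z \<notin> S" using sym unfolding D_def by auto
        then show "T2 z y = 0" using gS by (simp add: T2_def dot_zero)
      qed
    qed
    finally show ?thesis .
  qed
  show ?thesis
    unfolding L1 R1 P1 L2 L3 by (simp add: R2 del: transpose_matrix_vector)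
qed

lemma T'_dl_comp:
  "(transpose M *v dl (x,i) z) $ k = (if z = x then M$i$k else 0)"
  by (simp add: mv_comp transpose_def dl_apply if_distrib cong: if_cong del: transpose_matrix_vector)

lemma T'_dl:
  fixes A :: "'v \<Rightarrow> 'v \<Rightarrow> 'k::field^'n::finite^'n"
  assumes gr: "graph E" and lf: "locally_finite E"
  shows "ls_transpose E A (dl (x,i)) y $ k = (if y = x then A x x$i$k else 0) + (if E x y then A x y$i$k else 0)"
proof -
  have sym: "E y x \<longleftrightarrow> E x y" using gr by (auto simp: graph_def)
  have finN: "finite {z. E y z}" using lf by (auto simp: locally_finite_def)
  show ?thesis
    using finN by (simp add: ls_transpose_def sum_component T'_dl_comp sum.delta sym del: transpose_matrix_vector)
qed

lemma dot_axis: "dot (axis i 1) w = w $ i"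
proof -
  have "dot (axis i 1) w = (\<Sum>j\<in>UNIV. if j = i then w $ j else 0)"
    unfolding dot_def by (rule sum.cong) (auto simp: axis_def)
  then show ?thesis by simp
qed

lemma sum_if_and: "(\<Sum>j\<in>(UNIV::'n::finite set). if P \<and> j = k then c j else 0) = (if P then c k else (0::'a::comm_monoid_add))"
  by (cases P) auto

lemma sum_fun_apply: "(\<Sum>w\<in>t. F w) x = (\<Sum>w\<in>t. (F w x :: 'b::comm_monoid_add))"
  by (induction t rule: infinite_finite_induct) auto

lemma dl_inj: "inj (dl :: 'v \<times> 'n::finite \<Rightarrow> 'v \<Rightarrow> 'k::field^'n)"
proof (rule injI)
  fix p q :: "'v \<times> 'n" assume "(dl p :: 'v \<Rightarrow> 'k::field^'n) = dl q"
  then have "(dl p :: 'v \<Rightarrow> 'k::field^'n) (fst p) $ snd p = dl q (fst p) $ snd p" by simp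
  then show "p = q" by (cases p, cases q) (auto simp: dl_apply split: if_splits)
qed

lemma dl_indep: "module.independent sc (range (dl :: _ \<Rightarrow> 'v \<Rightarrow> 'k::field^'n))"
proof -
  interpret vs: vector_space "sc :: 'k \<Rightarrow> ('v \<Rightarrow> 'k^'n) \<Rightarrow> _" by (rule vs_sc)
  show ?thesis unfolding vs.independent_explicit_module
  proof (intro allI impI)
    fix t u and v :: "'v \<Rightarrow> 'k^'n"
    assume t: "finite t" "t \<subseteq> range dl" "(\<Sum>v\<in>t. sc (u v) v) = 0" "v \<in> t"
    then obtain x j where v: "v = dl (x,j)" by auto
    have "0 = (\<Sum>v\<in>t. sc (u v) v) x $ j" using t(3) by simp
    also have "\<dots> = (\<Sum>w\<in>t. u w * w x $ j)" by (simp add: sum_fun_apply sum_component sc_def)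
    also have "\<dots> = (\<Sum>w\<in>t. if w = v then u w else 0)"
    proof (rule sum.cong[OF refl])
      fix w assume "w \<in> t"
      then obtain y k where w: "w = dl (y,k)" using t(2) by auto
      show "u w * w x $ j = (if w = v then u w else 0)"
        using dl_inj[THEN injD, of "(y,k)" "(x,j)"] unfolding w v dl_apply by auto
    qed
    also have "\<dots> = u v" using t by simp
    finally show "u v = 0" by simp
  qed
qed

theorem theorem1p8:
  fixes E :: "'v \<Rightarrow> 'v \<Rightarrow> bool"
    and A :: "'v \<Rightarrow> 'v \<Rightarrow> 'k::field^'n::finite^'n"
  assumes "graph E" and "locally_finite E"
  shows "surj (ls_map E A) \<longleftrightarrow> pre_injective (ls_transpose E A)"
proof
  assume su: "surj (ls_map E A)"
  interpret l: Vector_Spaces.linear sc sc "ls_transpose E A" by (rule T'_linear)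
  show "pre_injective (ls_transpose E A)"
    unfolding pre_injective_def l.inj_on_iff_eq_0[OF fin_supp_subspace]
  proof (intro ballI impI)
    fix g :: "'v \<Rightarrow> 'k^'n" assume gF: "g \<in> fin_supp" and g0: "ls_transpose E A g = 0"
    have "g x0 $ i = 0" for x0 i
    proof -
      obtain f where f: "ls_map E A f = dl (x0,i)" using su by (metis surjD)
      define S where "S = insert x0 {x. g x \<noteq> 0}"
      have S: "finite S" using gF by (simp add: S_def fin_supp_def)
      have gS: "\<forall>x. x \<notin> S \<longrightarrow> g x = 0" by (auto simp: S_def)
      define D where "D = S \<union> (\<Union>x\<in>S. {y. E x y})"
      have finD: "finite D" unfolding D_def using S assms(2) by (auto simp: locally_finite_def)
      have x0D: "x0 \<in> D" by (simp add: D_def S_def)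
      have "(\<Sum>x\<in>D. dot (ls_map E A f x) (g x)) = (\<Sum>y\<in>D. dot (f y) (ls_transpose E A g y))"
        unfolding D_def by (rule adj[OF assms(1,2) S gS])
      also have "\<dots> = 0" by (simp add: g0 dot_zero)
      finally have eq: "(\<Sum>x\<in>D. dot (ls_map E A f x) (g x)) = 0" .
      have "(\<Sum>x\<in>D. dot (ls_map E A f x) (g x)) = (\<Sum>x\<in>D. if x = x0 then g x0 $ i else 0)"
        by (rule sum.cong[OF refl]) (auto simp: f dl_def dot_axis dot_comm[of 0] dot_zero)
      also have "\<dots> = g x0 $ i" using finD x0D by simp
      finally show "g x0 $ i = 0" using eq by simp
    qed
    then show "g = 0" by (simp add: fun_eq_iff vec_eq_iff)
  qed
next
  assume pi: "pre_injective (ls_transpose E A)"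
  interpret vs: vector_space "sc :: 'k \<Rightarrow> ('v \<Rightarrow> 'k^'n) \<Rightarrow> _" by (rule vs_sc)
  interpret vp: vector_space_pair "sc :: 'k \<Rightarrow> ('v \<Rightarrow> 'k^'n) \<Rightarrow> _" sc
    by (simp add: vector_space_pair_def vs_sc)
  interpret vq: vector_space_pair "sc :: 'k \<Rightarrow> ('v \<Rightarrow> 'k^'n) \<Rightarrow> _" "(*)"
    by (simp add: vector_space_pair_def vs_sc vs_k)
  obtain gi where gi: "gi ` UNIV \<subseteq> fin_supp" "Vector_Spaces.linear sc sc gi"
      "\<forall>v\<in>fin_supp. gi (ls_transpose E A v) = v"
    using vp.linear_exists_left_inverse_on[OF T'_linear fin_supp_subspace pi[unfolded pre_injective_def]]
    by blast
  show "surj (ls_map E A)"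
    unfolding surj_def
  proof
    fix h :: "'v \<Rightarrow> 'k^'n"
    obtain L where L: "Vector_Spaces.linear sc (*) L"
      "\<forall>b\<in>range (dl :: 'v \<times> 'n \<Rightarrow> _). L b = (\<lambda>w. h (fst (inv dl w)) $ snd (inv dl w)) b"
      using vq.linear_independent_extend[OF dl_indep, of "\<lambda>w. h (fst (inv dl w)) $ snd (inv dl w)"] by blast
    have Ldl: "L (dl p) = h (fst p) $ snd p" for p
      proof -
      have "inv (dl :: _ \<Rightarrow> 'v \<Rightarrow> 'k^'n) (dl p) = p" by (rule inv_f_f[OF dl_inj])
      moreover have "L (dl p) = h (fst (inv dl (dl p :: 'v \<Rightarrow> 'k^'n))) $ snd (inv dl (dl p :: 'v \<Rightarrow> 'k^'n))"
        using L(2) by (metis rangeI)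
      ultimately show ?thesis by simp
    qed
    define \<psi> where "\<psi> = L \<circ> gi"
    have l\<psi>: "Vector_Spaces.linear sc (*) \<psi>"
      unfolding \<psi>_def by (rule Vector_Spaces.linear_compose[OF gi(2) L(1)])
    interpret lp: Vector_Spaces.linear sc "(*)" \<psi> by (rule l\<psi>)
    have dlF: "(dl p :: 'v \<Rightarrow> 'k^'n) \<in> fin_supp" for p :: "'v \<times> 'n"
    proof -
      have "{x. (dl p :: 'v \<Rightarrow> 'k^'n) x \<noteq> 0} \<subseteq> {fst p}" by (auto simp: dl_def)
      then show ?thesis unfolding fin_supp_def using finite_subset by auto
    qed
    have \<psi>T: "\<psi> (ls_transpose E A (dl p)) = h (fst p) $ snd p" for p
      using gi(3) dlF Ldl by (simp add: \<psi>_def)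
    define f where "f y = (\<chi> j. \<psi> (dl (y,j)))" for y
    have finN: "finite {y. E x y}" for x using assms(2) by (auto simp: locally_finite_def)
    have "ls_map E A f x $ i = h x $ i" for x i
    proof -
      have exp: "ls_transpose E A (dl (x,i)) = (\<Sum>j\<in>UNIV. sc (A x x$i$j) (dl (x,j)))
          + (\<Sum>y\<in>{y. E x y}. \<Sum>j\<in>UNIV. sc (A x y$i$j) (dl (y,j)))"
      proof -
        have "ls_transpose E A (dl (x,i)) z $ k = ((\<Sum>j\<in>UNIV. sc (A x x$i$j) (dl (x,j)))
          + (\<Sum>y\<in>{y. E x y}. \<Sum>j\<in>UNIV. sc (A x y$i$j) (dl (y,j)))) z $ k" for z k
          using finN[of x] assms(1)
          by (simp add: T'_dl[OF assms] sum_fun_apply sum_component sc_def dl_apply if_distrib sum.delta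
              sum_if_and sum.delta' graph_def cong: if_cong)
        then show ?thesis by (simp add: fun_eq_iff vec_eq_iff)
      qed
      have "h x $ i = \<psi> (ls_transpose E A (dl (x,i)))" using \<psi>T[of "(x,i)"] by simp
      also have "\<dots> = (\<Sum>j\<in>UNIV. A x x$i$j * \<psi> (dl (x,j)))
          + (\<Sum>y\<in>{y. E x y}. \<Sum>j\<in>UNIV. A x y$i$j * \<psi> (dl (y,j)))"
        unfolding exp by (simp add: lp.add lp.sum lp.scale)
      also have "\<dots> = ls_map E A f x $ i"
        by (simp add: ls_map_def sum_component mv_comp f_def)
      finally show "ls_map E A f x $ i = h x $ i" by simp
    qed
    then have "ls_map E A f = h" by (simp add: fun_eq_iff vec_eq_iff)
    then show "\<exists>f. h = ls_map E A f" by metis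
  qed
qed

end
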